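(* Fix integers $d, d_z, d_w \ge 1$ and $K \ge 1$. Let the data distribution be $p_{\text{data}}(x) = \prod_{i=1}^d \mu_{x,i}^{x_i}(1-\mu_{x,i})^{1-x_i}$ on $x \in \{0,1\}^d$ (product Bernoulli), for a fixed vector $\mu_x \in (0,1)^d$. Consider the single-class ($C=1$) GMVAE loss $-\mathbb{E}_{x\sim p_{\text{data}}}[\mathcal{L}(K)]$ defined in the context, minimized over all choices of the (measurable) functions $\mu(\cdot;\phi_z),\sigma^2(\cdot;\phi_z)$, $\mu(\cdot;\phi_w),\sigma^2(\cdot;\phi_w)$, $\mu_k(\cdot;\beta),\sigma_k^2(\cdot;\beta)$ ($k=1,\dots,K$), and $\mu(\cdot;\theta)$ (variances strictly positive, decoder means in $(0,1)^d$). Then for every $K\ge 1$, $$\min\; -\mathbb{E}_{x\sim p_{\text{data}}}[\mathcal{L}(K)] = -\mathbb{E}_{x\sim p_{\text{data}}}[\log p_{\text{data}}(x)],$$ so the optimal loss does not depend on $K$. Moreover, for any constant vectors $\mu_z\in\mathbb{R}^{d_z}$ and $\sigma_z\in(0,\infty)^{d_z}$, a global minimizer is given by: $\mu(x;\phi_z)=\mu_z$, $\sigma^2(x;\phi_z)=\sigma_z^2$ for all $x$; $\mu_k(w;\beta)=\mu_z$, $\sigma_k^2(w;\beta)=\sigma_z^2$ for all $k$ and $w$; $\mu(x;\phi_w)=\vec 0$, $\sigma^2(x;\phi_w)=\vec 1$ for all $x$; and $\mu(z;\theta)=\mu_x$ for all $z$.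
   Context: Single-class GMVAE with $K$ subclusters. Generative model: $w\sim\mathcal N(0,I_{d_w})$; $v\in\{1,\dots,K\}$ uniform, $p(v=j)=1/K$; $z\mid w,v=j \sim \mathcal N(\mu_j(w;\beta),\operatorname{diag}\sigma_j^2(w;\beta))$ on $\mathbb R^{d_z}$; $x\mid z\sim$ product Bernoulli with mean vector $\mu(z;\theta)$, i.e. $p_\theta(x|z)=\prod_i \mu(z;\theta)_i^{x_i}(1-\mu(z;\theta)_i)^{1-x_i}$. Recognition model: $q_{\phi_z}(z|x)=\mathcal N(\mu(x;\phi_z),\operatorname{diag}\sigma^2(x;\phi_z))$, $q_{\phi_w}(w|x)=\mathcal N(\mu(x;\phi_w),\operatorname{diag}\sigma^2(x;\phi_w))$, and $p_\beta(v=j|z,w)=\frac{p_\beta(z|w,v=j)p(v=j)}{\sum_{j'}p_\beta(z|w,v=j')p(v=j')}$. The ELBO is $\mathcal L(K)=\mathbb E_{q_{\phi_z}(z|x)}[\log p_\theta(x|z)] - \mathbb E_{q_{\phi_w}(w|x)q_{\phi_z}(z|x)}\big[\log q_{\phi_z}(z|x)-\sum_{j=1}^K p_\beta(v=j|z,w)\log p_\beta(z|w,v=j)\big] - \mathrm{KL}(q_{\phi_w}(w|x)\,\|\,p(w)) - \mathbb E_{q_{\phi_w}(w|x)q_{\phi_z}(z|x)}\big[\mathrm{KL}(p_\beta(v|z,w)\,\|\,p(v))\big]$, and the loss is $-\mathbb E_{x\sim p_{\text{data}}}[\mathcal L(K)]$. (The paper assumes the neural networks are expressive enough to realize the functions considered;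 here the minimization is taken over all such functions.) *)

theory Defs
  imports "HOL-Probability.Probability"
begin

text \<open>Data points x are elements of {0,1}^d, represented as Boolean vectors indexed by a
finite type 'd (x i = True means x_i = 1).\<close>

definition bern :: "real^'d \<Rightarrow> ('d::finite \<Rightarrow> bool) \<Rightarrow> real" where
  "bern mu x = (\<Prod>i\<in>UNIV. (mu$i) ^ (if x i then 1 else 0) * (1 - mu$i) ^ (if x i then 0 else 1))"

definition gauss_diag :: "real^'n \<Rightarrow> real^'n \<Rightarrow> real^'n::finite \<Rightarrow> real" where
  "gauss_diag m s2 z = (\<Prod>i\<in>UNIV. normal_density (m$i) (sqrt (s2$i)) (z$i))"

text \<open>Posterior p_beta(v=j | z, w) with uniform prior p(v=j) = 1/K, clusters j = 0..K-1.\<close>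
definition post_v :: "nat \<Rightarrow> (nat \<Rightarrow> real^'w::finite \<Rightarrow> real^'z::finite) \<Rightarrow> (nat \<Rightarrow> real^'w \<Rightarrow> real^'z)
    \<Rightarrow> nat \<Rightarrow> real^'z \<Rightarrow> real^'w \<Rightarrow> real" where
  "post_v K mb sb j z w =
     gauss_diag (mb j w) (sb j w) z * (1 / real K) /
     (\<Sum>j'<K. gauss_diag (mb j' w) (sb j' w) z * (1 / real K))"

text \<open>The four integrands of the ELBO L(K) for a fixed data point x.
 mz, sz: encoder mean/variance for z; mw, sw: encoder mean/variance for w;
 mb j, sb j: prior mean/variance of z given w, v=j; dec: decoder Bernoulli mean.\<close>

definition elbo_int1 where
  "elbo_int1 (mz :: ('d::finite \<Rightarrow> bool) \<Rightarrow> real^'z::finite) sz (dec :: real^'z \<Rightarrow> real^'d) x =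
     (\<lambda>z. gauss_diag (mz x) (sz x) z * ln (bern (dec z) x))"

definition elbo_int2 where
  "elbo_int2 K (mz :: ('d::finite \<Rightarrow> bool) \<Rightarrow> real^'z::finite) sz
       (mw :: ('d \<Rightarrow> bool) \<Rightarrow> real^'w::finite) sw mb sb x =
     (\<lambda>(w, z). gauss_diag (mw x) (sw x) w * gauss_diag (mz x) (sz x) z *
        (ln (gauss_diag (mz x) (sz x) z)
         - (\<Sum>j<K. post_v K mb sb j z w * ln (gauss_diag (mb j w) (sb j w) z))))"

definition elbo_int3 where
  "elbo_int3 (mw :: ('d::finite \<Rightarrow> bool) \<Rightarrow> real^'w::finite) sw x =
     (\<lambda>w. gauss_diag (mw x) (sw x) w * ln (gauss_diag (mw x) (sw x) w / gauss_diag 0 1 w))"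

definition elbo_int4 where
  "elbo_int4 K (mz :: ('d::finite \<Rightarrow> bool) \<Rightarrow> real^'z::finite) sz
       (mw :: ('d \<Rightarrow> bool) \<Rightarrow> real^'w::finite) sw mb sb x =
     (\<lambda>(w, z). gauss_diag (mw x) (sw x) w * gauss_diag (mz x) (sz x) z *
        (\<Sum>j<K. post_v K mb sb j z w * ln (post_v K mb sb j z w / (1 / real K))))"

text \<open>ELBO L(K) at data point x:
  E_q[log p(x|z)] - E[log q(z|x) - sum_j p(v=j|z,w) log p(z|w,v=j)] - KL(q(w|x)||p(w))
  - E[KL(p(v|z,w) || p(v))].\<close>
definition elbo where
  "elbo K mz sz mw sw mb sb dec x =
     integral\<^sup>L lborel (elbo_int1 mz sz dec x)
   - integral\<^sup>L lborel (elbo_int2 K mz sz mw sw mb sb x)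
   - integral\<^sup>L lborel (elbo_int3 mw sw x)
   - integral\<^sup>L lborel (elbo_int4 K mz sz mw sw mb sb x)"

definition gmvae_loss where
  "gmvae_loss (mux :: real^'d::finite) K mz sz mw sw mb sb dec =
     - (\<Sum>x\<in>UNIV. bern mux x * elbo K mz sz mw sw mb sb dec x)"

definition gmvae_admissible where
  "gmvae_admissible K (mz :: ('d::finite \<Rightarrow> bool) \<Rightarrow> real^'z::finite) sz
       (mw :: ('d \<Rightarrow> bool) \<Rightarrow> real^'w::finite) sw
       (mb :: nat \<Rightarrow> real^'w \<Rightarrow> real^'z) sb (dec :: real^'z \<Rightarrow> real^'d) \<longleftrightarrow>
     (\<forall>x i. 0 < sz x $ i) \<and> (\<forall>x i. 0 < sw x $ i) \<and>
     (\<forall>j<K. \<forall>w i. 0 < sb j w $ i) \<and>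
     (\<forall>z i. 0 < dec z $ i \<and> dec z $ i < 1) \<and>
     (\<forall>j<K. mb j \<in> borel_measurable borel \<and> sb j \<in> borel_measurable borel) \<and>
     dec \<in> borel_measurable borel"

definition gmvae_loss_defined where
  "gmvae_loss_defined K (mz :: ('d::finite \<Rightarrow> bool) \<Rightarrow> real^'z::finite) sz
       (mw :: ('d \<Rightarrow> bool) \<Rightarrow> real^'w::finite) sw mb sb (dec :: real^'z \<Rightarrow> real^'d) \<longleftrightarrow>
     (\<forall>x. integrable lborel (elbo_int1 mz sz dec x) \<and>
          integrable lborel (elbo_int2 K mz sz mw sw mb sb x) \<and>
          integrable lborel (elbo_int3 mw sw x) \<and>
          integrable lborel (elbo_int4 K mz sz mw sw mb sb x))"

end

theory Submission
  imports Defs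
begin

lemma borel_measurable_vec_nth_comp[measurable (raw)]:
  "f \<in> borel_measurable M \<Longrightarrow> (\<lambda>x. f x $ i :: real) \<in> borel_measurable M"
  using measurable_compose[OF _ borel_measurable_nth] by blast

lemma gauss_diag_nonneg: "0 \<le> gauss_diag m s z"
  unfolding gauss_diag_def by (intro prod_nonneg) auto

lemma gauss_diag_pos: "(\<forall>i. 0 < s $ i) \<Longrightarrow> 0 < gauss_diag m s z"
  unfolding gauss_diag_def by (intro prod_pos) (auto intro!: normal_density_pos)

lemma Basis_vec_real: "(Basis :: (real^'n::finite) set) = range (\<lambda>i. axis i 1)"
  unfolding Basis_vec_def by auto

lemma inj_axis1: "inj (\<lambda>i::'n::finite. axis i (1::real))"
  by (auto simp: inj_def axis_eq_axis)

lemma gauss_diag_nn_integral: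
  fixes m s :: "real^'n::finite"
  assumes "\<forall>i. 0 < s $ i"
  shows "(\<integral>\<^sup>+z. ennreal (gauss_diag m s z) \<partial>lborel) = 1"
proof -
  define idx where "idx b = (THE i. b = axis i (1::real))" for b :: "real^'n"
  have idx: "idx (axis i 1) = i" for i
    unfolding idx_def by (rule the_equality) (auto simp: axis_eq_axis)
  define f where "f b x = normal_density (m $ idx b) (sqrt (s $ idx b)) x" for b x
  have eq: "(\<lambda>z. ennreal (gauss_diag m s z)) = (\<lambda>z. ennreal (\<Prod>b\<in>Basis. f b (z \<bullet> b)))"
  proof
    fix z
    have "(\<Prod>b\<in>Basis. f b (z \<bullet> b)) = (\<Prod>i\<in>UNIV. f (axis i 1) (z \<bullet> axis i 1))"
      unfolding Basis_vec_real by (subst prod.reindex[OF inj_axis1]) simp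
    also have "\<dots> = gauss_diag m s z"
      by (simp add: gauss_diag_def f_def idx inner_axis)
    finally show "ennreal (gauss_diag m s z) = ennreal (\<Prod>b\<in>Basis. f b (z \<bullet> b))" by simp
  qed
  have "(\<integral>\<^sup>+z. ennreal (gauss_diag m s z) \<partial>lborel) = (\<integral>\<^sup>+z. (\<Prod>b\<in>Basis. ennreal (f b (z \<bullet> b))) \<partial>lborel)"
    unfolding eq by (simp add: prod_ennreal f_def)
  also have "\<dots> = (\<Prod>b\<in>Basis. (\<integral>\<^sup>+x. ennreal (f b x) \<partial>lborel))"
    by (rule nn_integral_lborel_prod) (auto simp: f_def)
  also have "\<dots> = (\<Prod>b\<in>(Basis::(real^'n) set). 1)"
  proof (rule prod.cong[OF refl])
    fix b :: "real^'n" assume "b \<in> Basis"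
    have "0 < sqrt (s $ idx b)" using assms by simp
    then show "(\<integral>\<^sup>+x. ennreal (f b x) \<partial>lborel) = 1"
      unfolding f_def
      by (subst nn_integral_eq_integral) (auto simp: integral_normal_density)
  qed
  finally show ?thesis by simp
qed

lemma gauss_diag_measurable[measurable (raw)]:
  assumes "mf \<in> borel_measurable M" "sf \<in> borel_measurable M" "zf \<in> borel_measurable M"
  shows "(\<lambda>x. gauss_diag (mf x) (sf x) (zf x)) \<in> borel_measurable M"
  unfolding gauss_diag_def normal_density_def using assms by measurable

lemma gauss_diag_integrable:
  fixes m s :: "real^'n::finite"
  assumes "\<forall>i. 0 < s $ i"
  shows "integrable lborel (gauss_diag m s)"
  by (rule integrableI_nonneg) (auto simp: gauss_diag_nonneg gauss_diag_nn_integral[OF assms])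

lemma gauss_diag_integral:
  fixes m s :: "real^'n::finite"
  assumes "\<forall>i. 0 < s $ i"
  shows "integral\<^sup>L lborel (gauss_diag m s) = 1"
proof -
  have "ennreal (integral\<^sup>L lborel (gauss_diag m s)) = 1"
    using gauss_diag_nn_integral[OF assms]
    by (subst nn_integral_eq_integral[symmetric]) (auto simp: gauss_diag_nonneg gauss_diag_integrable[OF assms])
  then show ?thesis by simp
qed

lemma product_integrable_integral:
  fixes f :: "'a \<Rightarrow> real" and g :: "'b \<Rightarrow> real"
  assumes "sigma_finite_measure M1" "sigma_finite_measure M2"
    and f: "integrable M1 f" and g: "integrable M2 g"
  shows "integrable (M1 \<Otimes>\<^sub>M M2) (\<lambda>(x,y). f x * g y)"
    and "integral\<^sup>L (M1 \<Otimes>\<^sub>M M2) (\<lambda>(x,y). f x * g y) = integral\<^sup>L M1 f * integral\<^sup>L M2 g"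
proof -
  interpret M1: sigma_finite_measure M1 by fact
  interpret M2: sigma_finite_measure M2 by fact
  interpret pair_sigma_finite M1 M2 ..
  have [measurable]: "f \<in> borel_measurable M1" "g \<in> borel_measurable M2" using f g by auto
  have "(\<integral>\<^sup>+p. ennreal (norm ((\<lambda>(x,y). f x * g y) p)) \<partial>(M1 \<Otimes>\<^sub>M M2))
      = (\<integral>\<^sup>+x. \<integral>\<^sup>+y. ennreal (norm (f x)) * ennreal (norm (g y)) \<partial>M2 \<partial>M1)"
    by (subst M2.nn_integral_fst[symmetric]) (auto simp: abs_mult ennreal_mult)
  also have "\<dots> = (\<integral>\<^sup>+x. ennreal (norm (f x)) * (\<integral>\<^sup>+y. ennreal (norm (g y)) \<partial>M2) \<partial>M1)"
    by (simp add: nn_integral_cmult)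
  also have "\<dots> = (\<integral>\<^sup>+x. ennreal (norm (f x)) \<partial>M1) * (\<integral>\<^sup>+y. ennreal (norm (g y)) \<partial>M2)"
    by (simp add: nn_integral_multc)
  also have "\<dots> < \<infinity>"
    using f g by (auto simp: integrable_iff_bounded ennreal_mult_less_top)
  finally show int: "integrable (M1 \<Otimes>\<^sub>M M2) (\<lambda>(x,y). f x * g y)"
    by (intro integrableI_bounded) auto
  have "integral\<^sup>L (M1 \<Otimes>\<^sub>M M2) (\<lambda>(x,y). f x * g y) = (\<integral>x. \<integral>y. f x * g y \<partial>M2 \<partial>M1)"
    using integral_fst'[OF int] by simp
  also have "\<dots> = integral\<^sup>L M1 f * integral\<^sup>L M2 g"
    by simp
  finally show "integral\<^sup>L (M1 \<Otimes>\<^sub>M M2) (\<lambda>(x,y). f x * g y) = integral\<^sup>L M1 f * integral\<^sup>L M2 g" .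
qed

lemma bern_measurable[measurable (raw)]:
  "f \<in> borel_measurable M \<Longrightarrow> (\<lambda>z. bern (f z) x) \<in> borel_measurable M"
  unfolding bern_def
  apply (rule borel_measurable_prod)
  subgoal for i by (cases "x i") simp_all
  done

lemma bern_pos: "(\<forall>i. 0 < mu $ i \<and> mu $ i < 1) \<Longrightarrow> 0 < bern mu x"
  unfolding bern_def by (intro prod_pos) auto

lemma bern_le1: assumes "\<forall>i. 0 < mu $ i \<and> mu $ i < 1" shows "bern mu x \<le> 1"
proof -
  have "0 \<le> mu$i" "mu$i \<le> 1" for i using assms by (auto simp: less_imp_le)
  then show ?thesis unfolding bern_def by (intro prod_le_1) auto
qed

lemma bern_sum: "(\<Sum>x\<in>UNIV. bern mu x) = 1"
proof -
  have "(\<Prod>i\<in>UNIV. \<Sum>b\<in>UNIV. (mu$i) ^ (if b then 1 else 0) * (1 - mu$i) ^ (if b then 0 else 1))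
      = (\<Sum>x\<in>PiE UNIV (\<lambda>_. UNIV). \<Prod>i\<in>UNIV. (mu$i) ^ (if x i then 1 else 0) * (1 - mu$i) ^ (if x i then 0 else 1))"
    by (rule prod_sum_PiE) auto
  moreover have "(\<Sum>b\<in>UNIV. (mu$i) ^ (if b then 1 else 0) * (1 - mu$i) ^ (if b then 0 else 1)) = 1" for i
    by (simp add: UNIV_bool)
  ultimately show ?thesis by (simp add: bern_def)
qed


definition Sg :: "nat \<Rightarrow> (nat \<Rightarrow> real^'w::finite \<Rightarrow> real^'z::finite) \<Rightarrow> (nat \<Rightarrow> real^'w \<Rightarrow> real^'z) \<Rightarrow> real^'w \<Rightarrow> real^'z \<Rightarrow> real" where
  "Sg K mb sb w z = (\<Sum>j<K. gauss_diag (mb j w) (sb j w) z)"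

definition Bfn where
  "Bfn K mb sb = (\<lambda>(w, z). gauss_diag 0 1 w / real K * Sg K mb sb w z)"

lemma Sg_measurable:
  fixes mb :: "nat \<Rightarrow> real^'w::finite \<Rightarrow> real^'z::finite"
  assumes "\<forall>j<K. mb j \<in> borel_measurable borel \<and> sb j \<in> borel_measurable borel"
  shows "(\<lambda>(w, z). Sg K mb sb w z) \<in> borel_measurable (lborel \<Otimes>\<^sub>M lborel)"
proof -
  have "(\<lambda>q. gauss_diag (mb j (fst q)) (sb j (fst q)) (snd q)) \<in> borel_measurable (lborel \<Otimes>\<^sub>M lborel)"
    if "j < K" for j
  proof -
    have [measurable]: "mb j \<in> borel_measurable borel" "sb j \<in> borel_measurable borel" using assms that by auto
    show ?thesis by measurable
  qed
  then have "(\<lambda>q. \<Sum>j<K. gauss_diag (mb j (fst q)) (sb j (fst q)) (snd q)) \<in> borel_measurable (lborel \<Otimes>\<^sub>M lborel)"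
    by (intro borel_measurable_sum) auto
  then show ?thesis by (simp add: Sg_def case_prod_beta')
qed

lemma Sg_pos:
  assumes "1 \<le> K" "\<forall>j<K. \<forall>w i. 0 < sb j w $ i"
  shows "0 < Sg K mb sb w z"
proof -
  have "0 < gauss_diag (mb 0 w) (sb 0 w) z" using assms by (intro gauss_diag_pos) auto
  also have "\<dots> \<le> Sg K mb sb w z" unfolding Sg_def
    using assms(1) by (intro member_le_sum) (auto simp: gauss_diag_nonneg)
  finally show ?thesis .
qed

lemma Bfn_int:
  fixes mb :: "nat \<Rightarrow> real^'w::finite \<Rightarrow> real^'z::finite"
  assumes K: "1 \<le> K" and pos: "\<forall>j<K. \<forall>w i. 0 < sb j w $ i"
    and meas: "\<forall>j<K. mb j \<in> borel_measurable borel \<and> sb j \<in> borel_measurable borel"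
  shows "integrable (lborel \<Otimes>\<^sub>M lborel) (Bfn K mb sb)"
    and "integral\<^sup>L (lborel \<Otimes>\<^sub>M lborel) (Bfn K mb sb) = 1"
    and "Bfn K mb sb \<in> borel_measurable (lborel \<Otimes>\<^sub>M lborel)"
    and "\<And>q. 0 \<le> Bfn K mb sb q"
proof -
  interpret pair_sigma_finite "lborel :: (real^'w) measure" "lborel :: (real^'z) measure" ..
  have [measurable]: "(\<lambda>(w, z). Sg K mb sb w z) \<in> borel_measurable (lborel \<Otimes>\<^sub>M lborel)"
    using Sg_measurable[OF meas] .
  show Bm: "Bfn K mb sb \<in> borel_measurable (lborel \<Otimes>\<^sub>M lborel)"
    unfolding Bfn_def by measurable
  show Bnn: "0 \<le> Bfn K mb sb q" for q
    unfolding Bfn_def Sg_def by (auto simp: gauss_diag_nonneg intro!: sum_nonneg mult_nonneg_nonneg divide_nonneg_nonneg split: prod.splits)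
  have inner: "(\<integral>\<^sup>+z. ennreal (Sg K mb sb w z) \<partial>lborel) = real K" for w
  proof -
    have "(\<integral>\<^sup>+z. ennreal (Sg K mb sb w z) \<partial>lborel) = (\<integral>\<^sup>+z. (\<Sum>j<K. ennreal (gauss_diag (mb j w) (sb j w) z)) \<partial>lborel)"
      unfolding Sg_def by (simp add: gauss_diag_nonneg)
    also have "\<dots> = (\<Sum>j<K. \<integral>\<^sup>+z. ennreal (gauss_diag (mb j w) (sb j w) z) \<partial>lborel)"
    proof (rule nn_integral_sum)
      fix j assume "j \<in> {..<K}"
      have "(\<lambda>z. gauss_diag (mb j w) (sb j w) z) \<in> borel_measurable lborel" by measurable
      then show "(\<lambda>z. ennreal (gauss_diag (mb j w) (sb j w) z)) \<in> borel_measurable lborel" by measurable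
    qed
    also have "\<dots> = (\<Sum>j<K. 1)"
      using pos by (intro sum.cong refl gauss_diag_nn_integral) auto
    finally show ?thesis by (simp add: ennreal_of_nat_eq_real_of_nat)
  qed
  have "(\<integral>\<^sup>+q. ennreal (Bfn K mb sb q) \<partial>(lborel \<Otimes>\<^sub>M lborel))
      = (\<integral>\<^sup>+w. \<integral>\<^sup>+z. ennreal (gauss_diag 0 1 w / real K) * ennreal (Sg K mb sb w z) \<partial>lborel \<partial>lborel)"
    using Bm by (subst lborel.nn_integral_fst[symmetric])
       (auto simp: Bfn_def ennreal_mult[symmetric] gauss_diag_nonneg Sg_def sum_nonneg)
  also have "\<dots> = (\<integral>\<^sup>+(w::real^'w). ennreal (gauss_diag 0 1 w / real K) * real K \<partial>lborel)"
    by (simp add: nn_integral_cmult inner)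
  also have "\<dots> = (\<integral>\<^sup>+(w::real^'w). ennreal (gauss_diag 0 1 w) \<partial>lborel)"
    using K by (intro nn_integral_cong) (auto simp: ennreal_mult[symmetric] gauss_diag_nonneg)
  also have "\<dots> = 1" by (rule gauss_diag_nn_integral) simp
  finally have nn: "(\<integral>\<^sup>+q. ennreal (Bfn K mb sb q) \<partial>(lborel \<Otimes>\<^sub>M lborel)) = 1" .
  show int: "integrable (lborel \<Otimes>\<^sub>M lborel) (Bfn K mb sb)"
    by (rule integrableI_nonneg) (use Bm Bnn nn in auto)
  have "ennreal (integral\<^sup>L (lborel \<Otimes>\<^sub>M lborel) (Bfn K mb sb)) = 1"
    using nn by (subst nn_integral_eq_integral[symmetric]) (use int Bnn in auto)
  then show "integral\<^sup>L (lborel \<Otimes>\<^sub>M lborel) (Bfn K mb sb) = 1" by simp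
qed


lemma elbo_le:
  fixes mz :: "('d::finite \<Rightarrow> bool) \<Rightarrow> real^'z::finite" and mw :: "('d \<Rightarrow> bool) \<Rightarrow> real^'w::finite"
    and mb :: "nat \<Rightarrow> real^'w \<Rightarrow> real^'z" and dec :: "real^'z \<Rightarrow> real^'d"
  assumes K: "1 \<le> K" and adm: "gmvae_admissible K mz sz mw sw mb sb dec"
    and def: "gmvae_loss_defined K mz sz mw sw mb sb dec" and p: "0 < p"
  shows "integrable (lborel \<Otimes>\<^sub>M lborel) (\<lambda>q. bern (dec (snd q)) x * Bfn K mb sb q)"
    and "p * elbo K mz sz mw sw mb sb dec x - p * ln p
          \<le> integral\<^sup>L (lborel \<Otimes>\<^sub>M lborel) (\<lambda>q. bern (dec (snd q)) x * Bfn K mb sb q) - p"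
proof -
  interpret pair_sigma_finite "lborel :: (real^'w) measure" "lborel :: (real^'z) measure" ..
  let ?M = "lborel \<Otimes>\<^sub>M lborel :: ((real^'w) \<times> (real^'z)) measure"
  note admD = adm[unfolded gmvae_admissible_def]
  have szp: "\<forall>i. 0 < sz x $ i" and swp: "\<forall>i. 0 < sw x $ i"
    and sbp: "\<forall>j<K. \<forall>w i. 0 < sb j w $ i" and decp: "\<And>z. \<forall>i. 0 < dec z $ i \<and> dec z $ i < 1"
    and meas: "\<forall>j<K. mb j \<in> borel_measurable borel \<and> sb j \<in> borel_measurable borel"
    and [measurable]: "dec \<in> borel_measurable borel"
    using admD by auto
  note Bf = Bfn_int[OF K sbp meas]
  have [measurable]: "Bfn K mb sb \<in> borel_measurable ?M" by (rule Bf(3))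
  define A where "A q = bern (dec (snd q)) x * Bfn K mb sb q" for q :: "(real^'w) \<times> (real^'z)"
  have Am: "A \<in> borel_measurable ?M" unfolding A_def by measurable
  show Aint: "integrable ?M (\<lambda>q. bern (dec (snd q)) x * Bfn K mb sb q)"
  proof (rule Bochner_Integration.integrable_bound[OF Bf(1)])
    show "(\<lambda>q. bern (dec (snd q)) x * Bfn K mb sb q) \<in> borel_measurable ?M" by measurable
    show "AE q in ?M. norm (bern (dec (snd q)) x * Bfn K mb sb q) \<le> norm (Bfn K mb sb q)"
      using bern_le1[OF decp] bern_pos[OF decp] Bf(4)
      by (intro AE_I2) (auto simp: abs_mult abs_of_pos[OF bern_pos[OF decp]] less_imp_le[OF bern_pos[OF decp]] intro!: mult_left_le_one_le)
  qed
  have sf: "sigma_finite_measure (lborel :: 'a::euclidean_space measure)"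
    by (rule lborel.sigma_finite_measure_axioms)
  define qw where "qw w = gauss_diag (mw x) (sw x) w" for w
  define qz where "qz z = gauss_diag (mz x) (sz x) z" for z
  define T1 where "T1 = (\<lambda>(w, z). qw w * elbo_int1 mz sz dec x z)"
  define T2 where "T2 = elbo_int2 K mz sz mw sw mb sb x"
  define T3 where "T3 = (\<lambda>(w, z). elbo_int3 mw sw x w * qz z)"
  define T4 where "T4 = elbo_int4 K mz sz mw sw mb sb x"
  define Q where "Q = (\<lambda>(w, z). qw w * qz z)"
  have i1: "integrable lborel (elbo_int1 mz sz dec x)" and i2: "integrable lborel (elbo_int2 K mz sz mw sw mb sb x)"
    and i3: "integrable lborel (elbo_int3 mw sw x)" and i4: "integrable lborel (elbo_int4 K mz sz mw sw mb sb x)"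
    using def unfolding gmvae_loss_defined_def by auto
  have qwi: "integrable lborel qw" "integral\<^sup>L lborel qw = 1"
    unfolding qw_def using gauss_diag_integrable[OF swp] gauss_diag_integral[OF swp] by (auto simp: fun_eq_iff)
  have qzi: "integrable lborel qz" "integral\<^sup>L lborel qz = 1"
    unfolding qz_def using gauss_diag_integrable[OF szp] gauss_diag_integral[OF szp] by (auto simp: fun_eq_iff)
  have T1i: "integrable ?M T1" "integral\<^sup>L ?M T1 = integral\<^sup>L lborel (elbo_int1 mz sz dec x)"
    using product_integrable_integral[OF sf sf qwi(1) i1] qwi(2) unfolding T1_def by auto
  have T3i: "integrable ?M T3" "integral\<^sup>L ?M T3 = integral\<^sup>L lborel (elbo_int3 mw sw x)"
    using product_integrable_integral[OF sf sf i3 qzi(1)] qzi(2) unfolding T3_def by auto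
  have Qi: "integrable ?M Q" "integral\<^sup>L ?M Q = 1"
    using product_integrable_integral[OF sf sf qwi(1) qzi(1)] qwi(2) qzi(2) unfolding Q_def by auto
  have T2i: "integrable ?M T2" "integral\<^sup>L ?M T2 = integral\<^sup>L lborel (elbo_int2 K mz sz mw sw mb sb x)"
    using i2 unfolding T2_def lborel_prod by auto
  have T4i: "integrable ?M T4" "integral\<^sup>L ?M T4 = integral\<^sup>L lborel (elbo_int4 K mz sz mw sw mb sb x)"
    using i4 unfolding T4_def lborel_prod by auto
  have E: "elbo K mz sz mw sw mb sb dec x - ln p
     = integral\<^sup>L ?M (\<lambda>q. T1 q - T2 q - T3 q - T4 q - ln p * Q q)"
    using T1i T2i T3i T4i Qi by (simp add: elbo_def)
  have key: "T1 q - T2 q - T3 q - T4 q - ln p * Q q \<le> A q / p - Q q" for q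
  proof -
    obtain w z where q: "q = (w, z)" by (cases q)
    define g where "g j = gauss_diag (mb j w) (sb j w) z" for j
    define S where "S = Sg K mb sb w z"
    define px where "px = bern (dec z) x"
    define pw where "pw = gauss_diag (0::real^'w) 1 w"
    have Kpos: "0 < real K" using K by simp
    have Spos: "0 < S" unfolding S_def using Sg_pos[OF K sbp] .
    have gpos: "j < K \<Longrightarrow> 0 < g j" for j unfolding g_def using sbp by (intro gauss_diag_pos) auto
    have pxpos: "0 < px" unfolding px_def by (rule bern_pos[OF decp])
    have pwpos: "0 < pw" unfolding pw_def by (rule gauss_diag_pos) simp
    have qwpos: "0 < qw w" unfolding qw_def by (rule gauss_diag_pos[OF swp])
    have qzpos: "0 < qz z" unfolding qz_def by (rule gauss_diag_pos[OF szp])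
    have Sdef: "S = (\<Sum>j<K. g j)" unfolding S_def Sg_def g_def ..
    have post: "post_v K mb sb j z w = g j / S" for j
    proof -
      have "(\<Sum>j'<K. gauss_diag (mb j' w) (sb j' w) z * (1 / real K)) = S * (1 / real K)"
        unfolding Sdef g_def by (simp add: sum_divide_distrib)
      then show ?thesis using Kpos Spos unfolding post_v_def g_def by (simp add: field_simps)
    qed
    have sum24: "(\<Sum>j<K. post_v K mb sb j z w * ln (g j)) - (\<Sum>j<K. post_v K mb sb j z w * ln (post_v K mb sb j z w / (1 / real K)))
        = ln S - ln (real K)"
    proof -
      have "(\<Sum>j<K. post_v K mb sb j z w * ln (g j)) - (\<Sum>j<K. post_v K mb sb j z w * ln (post_v K mb sb j z w / (1 / real K)))
          = (\<Sum>j<K. g j * (ln S - ln (real K)) / S)"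
        unfolding sum_subtractf[symmetric]
      proof (rule sum.cong[OF refl])
        fix j assume "j \<in> {..<K}"
        then have gp: "0 < g j" using gpos by auto
        have "ln (g j / S / (1 / real K)) = ln (g j) - ln S + ln (real K)"
          using gp Spos Kpos by (simp add: ln_div ln_mult)
        then show "post_v K mb sb j z w * ln (g j) - post_v K mb sb j z w * ln (post_v K mb sb j z w / (1 / real K))
            = g j * (ln S - ln (real K)) / S"
          unfolding post \<open>ln (g j / S / (1 / real K)) = _\<close> using Spos by (simp add: field_simps)
      qed
      also have "\<dots> = (\<Sum>j<K. g j) * (ln S - ln (real K)) / S"
        by (simp add: sum_divide_distrib[symmetric] sum_distrib_right[symmetric])
      also have "\<dots> = ln S - ln (real K)" using Spos unfolding Sdef[symmetric] by simp
      finally show ?thesis .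
    qed
    have T24: "T2 q + T4 q = qw w * qz z * (ln (qz z) - (ln S - ln (real K)))"
    proof -
      have "T2 q + T4 q = qw w * qz z * (ln (qz z) - ((\<Sum>j<K. post_v K mb sb j z w * ln (g j))
          - (\<Sum>j<K. post_v K mb sb j z w * ln (post_v K mb sb j z w / (1 / real K)))))"
        unfolding T2_def T4_def q elbo_int2_def elbo_int4_def g_def qw_def qz_def by (simp add: algebra_simps)
      then show ?thesis unfolding sum24 .
    qed
    have T3e: "T3 q = qw w * (ln (qw w) - ln pw) * qz z"
      unfolding T3_def q elbo_int3_def qw_def[symmetric] using qwpos pwpos unfolding pw_def by (simp add: ln_div)
    have T1e: "T1 q = qw w * (qz z * ln px)"
      unfolding T1_def q elbo_int1_def qz_def[symmetric] px_def by simp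
    have Ae: "A q = px * (pw / real K * S)"
      unfolding A_def q Bfn_def px_def pw_def S_def by simp
    define y where "y = A q / (qw w * qz z * p)"
    have ypos: "0 < y" unfolding y_def Ae using pxpos pwpos Kpos Spos qwpos qzpos p by simp
    have lny: "ln y = ln px + ln pw - ln (real K) + ln S - ln (qw w) - ln (qz z) - ln p"
      unfolding y_def Ae using pxpos pwpos Kpos Spos qwpos qzpos p by (simp add: ln_div ln_mult)
    have "T1 q - T2 q - T3 q - T4 q - ln p * Q q = qw w * qz z * ln y"
      using T24 T1e T3e unfolding lny Q_def q by (simp add: algebra_simps)
    also have "\<dots> \<le> qw w * qz z * (y - 1)"
      using ypos qwpos qzpos by (intro mult_left_mono ln_le_minus_one) auto
    also have "\<dots> = A q / p - Q q"
      unfolding y_def Q_def q using qwpos qzpos p by (simp add: field_simps)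
    finally show ?thesis .
  qed
  have "integral\<^sup>L ?M (\<lambda>q. T1 q - T2 q - T3 q - T4 q - ln p * Q q) \<le> integral\<^sup>L ?M (\<lambda>q. A q / p - Q q)"
    using T1i T2i T3i T4i Qi Aint key unfolding A_def by (intro integral_mono) auto
  also have "\<dots> = integral\<^sup>L ?M A / p - 1"
    using Qi Aint unfolding A_def by simp
  finally have "elbo K mz sz mw sw mb sb dec x - ln p \<le> integral\<^sup>L ?M A / p - 1"
    using E by simp
  then have "p * (elbo K mz sz mw sw mb sb dec x - ln p) \<le> p * (integral\<^sup>L ?M A / p - 1)"
    using p by (intro mult_left_mono) auto
  then show "p * elbo K mz sz mw sw mb sb dec x - p * ln p
          \<le> integral\<^sup>L ?M (\<lambda>q. bern (dec (snd q)) x * Bfn K mb sb q) - p"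
    using p by (simp add: A_def[abs_def] algebra_simps)
qed


theorem proposition1:
  fixes mux :: "real^'d::finite" and K :: nat
  assumes "1 \<le> K" and "\<forall>i. 0 < mux $ i \<and> mux $ i < 1"
  shows "(\<forall>(mz :: ('d \<Rightarrow> bool) \<Rightarrow> real^'z::finite) sz (mw :: ('d \<Rightarrow> bool) \<Rightarrow> real^'w::finite) sw mb sb dec.
            gmvae_admissible K mz sz mw sw mb sb dec \<and> gmvae_loss_defined K mz sz mw sw mb sb dec \<longrightarrow>
            - (\<Sum>x\<in>UNIV. bern mux x * ln (bern mux x)) \<le> gmvae_loss mux K mz sz mw sw mb sb dec)
       \<and> (\<forall>(muz :: real^'z) (sigz :: real^'z). (\<forall>i. 0 < sigz $ i) \<longrightarrow>
            (let mz = (\<lambda>x. muz); sz = (\<lambda>x. \<chi> i. (sigz $ i)^2);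
                 mw = (\<lambda>x. 0 :: real^'w); sw = (\<lambda>x. 1 :: real^'w);
                 mb = (\<lambda>j w. muz); sb = (\<lambda>j w. \<chi> i. (sigz $ i)^2);
                 dec = (\<lambda>z. mux)
             in gmvae_admissible K mz sz mw sw mb sb dec \<and> gmvae_loss_defined K mz sz mw sw mb sb dec \<and>
                gmvae_loss mux K mz sz mw sw mb sb dec = - (\<Sum>x\<in>UNIV. bern mux x * ln (bern mux x))))"
proof (intro conjI allI impI)
  fix mz :: "('d \<Rightarrow> bool) \<Rightarrow> real^'z::finite" and sz and mw :: "('d \<Rightarrow> bool) \<Rightarrow> real^'w::finite" and sw mb sb dec
  assume h: "gmvae_admissible K mz sz mw sw mb sb dec \<and> gmvae_loss_defined K mz sz mw sw mb sb dec"
  let ?M = "lborel \<Otimes>\<^sub>M lborel :: ((real^'w) \<times> (real^'z)) measure"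
  have sbp: "\<forall>j<K. \<forall>w i. 0 < sb j w $ i" and decp: "\<And>z. \<forall>i. 0 < dec z $ i \<and> dec z $ i < 1"
    and meas: "\<forall>j<K. mb j \<in> borel_measurable borel \<and> sb j \<in> borel_measurable borel"
    using h unfolding gmvae_admissible_def by auto
  note Bf = Bfn_int[OF assms(1) sbp meas]
  define A where "A x q = bern (dec (snd q)) x * Bfn K mb sb q" for x and q :: "(real^'w) \<times> (real^'z)"
  have pp: "0 < bern mux x" for x using bern_pos assms(2) by blast
  have Ai: "integrable ?M (A x)" for x
    unfolding A_def[abs_def] using elbo_le(1)[OF assms(1) _ _ pp] h by blast
  have le: "bern mux x * elbo K mz sz mw sw mb sb dec x - bern mux x * ln (bern mux x) \<le> integral\<^sup>L ?M (A x) - bern mux x" for x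
    unfolding A_def[abs_def] using elbo_le(2)[OF assms(1) _ _ pp] h by blast
  have "(\<Sum>x\<in>UNIV. bern mux x * elbo K mz sz mw sw mb sb dec x - bern mux x * ln (bern mux x))
      \<le> (\<Sum>x\<in>UNIV. integral\<^sup>L ?M (A x) - bern mux x)"
    by (rule sum_mono) (rule le)
  also have "\<dots> = integral\<^sup>L ?M (\<lambda>q. \<Sum>x\<in>UNIV. A x q) - 1"
    using Ai by (simp add: sum_subtractf integral_sum bern_sum)
  also have "(\<lambda>q. \<Sum>x\<in>UNIV. A x q) = Bfn K mb sb"
    by (simp add: A_def fun_eq_iff sum_distrib_right[symmetric] bern_sum)
  finally show "- (\<Sum>x\<in>UNIV. bern mux x * ln (bern mux x)) \<le> gmvae_loss mux K mz sz mw sw mb sb dec"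
    using Bf(2) unfolding gmvae_loss_def by (simp add: sum_subtractf)
next
  fix muz sigz :: "real^'z::finite"
  assume sig: "\<forall>i. 0 < sigz $ i"
  define s2 where "s2 = (\<chi> i. (sigz $ i)^2 :: real^'z)"
  have s2p: "\<forall>i. 0 < s2 $ i" unfolding s2_def using sig by (simp add: less_imp_neq[symmetric])
  have onep: "\<forall>i. 0 < (1::real^'w::finite) $ i" by simp
  have Kpos: "0 < real K" using assms(1) by simp
  have z2: "elbo_int2 K (\<lambda>x. muz) (\<lambda>x. s2) (\<lambda>x. 0 :: real^'w) (\<lambda>x. 1) (\<lambda>j w. muz) (\<lambda>j w. s2) x q = 0" for x q
  proof -
    obtain w z where q: "q = (w, z)" by (cases q)
    have gp: "0 < gauss_diag muz s2 z" by (rule gauss_diag_pos[OF s2p])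
    have "post_v K (\<lambda>j w. muz) (\<lambda>j w. s2) j z (w::real^'w) = 1 / real K" for j
      unfolding post_v_def using gp Kpos by simp
    then show ?thesis unfolding elbo_int2_def q using Kpos by simp
  qed
  have z4: "elbo_int4 K (\<lambda>x. muz) (\<lambda>x. s2) (\<lambda>x. 0 :: real^'w) (\<lambda>x. 1) (\<lambda>j w. muz) (\<lambda>j w. s2) x q = 0" for x q
  proof -
    obtain w z where q: "q = (w, z)" by (cases q)
    have gp: "0 < gauss_diag muz s2 z" by (rule gauss_diag_pos[OF s2p])
    have "post_v K (\<lambda>j w. muz) (\<lambda>j w. s2) j z (w::real^'w) = 1 / real K" for j
      unfolding post_v_def using gp Kpos by simp
    then show ?thesis unfolding elbo_int4_def q using Kpos by simp
  qed
  have z3: "elbo_int3 (\<lambda>x. 0 :: real^'w) (\<lambda>x. 1) x w = 0" for x w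
    unfolding elbo_int3_def using gauss_diag_pos[OF onep, of 0 w] by simp
  have e1: "elbo_int1 (\<lambda>x. muz) (\<lambda>x. s2) (\<lambda>z. mux) x = (\<lambda>z. gauss_diag muz s2 z * ln (bern mux x))" for x
    unfolding elbo_int1_def ..
  have i1: "integrable lborel (elbo_int1 (\<lambda>x. muz) (\<lambda>x. s2) (\<lambda>z. mux) x)" for x
    unfolding e1 using gauss_diag_integrable[OF s2p] by simp
  have v1: "integral\<^sup>L lborel (elbo_int1 (\<lambda>x. muz) (\<lambda>x. s2) (\<lambda>z. mux) x) = ln (bern mux x)" for x
    unfolding e1 using gauss_diag_integral[OF s2p] by simp
  have fz2: "elbo_int2 K (\<lambda>x. muz) (\<lambda>x. s2) (\<lambda>x. 0 :: real^'w) (\<lambda>x. 1) (\<lambda>j w. muz) (\<lambda>j w. s2) x = (\<lambda>q. 0)" for x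
    by (rule ext, rule z2)
  have fz4: "elbo_int4 K (\<lambda>x. muz) (\<lambda>x. s2) (\<lambda>x. 0 :: real^'w) (\<lambda>x. 1) (\<lambda>j w. muz) (\<lambda>j w. s2) x = (\<lambda>q. 0)" for x
    by (rule ext, rule z4)
  have fz3: "elbo_int3 (\<lambda>x. 0 :: real^'w) (\<lambda>x. 1) x = (\<lambda>w. 0)" for x
    by (rule ext, rule z3)
  show "let mz = (\<lambda>x. muz); sz = (\<lambda>x. \<chi> i. (sigz $ i)^2);
                 mw = (\<lambda>x. 0 :: real^'w); sw = (\<lambda>x. 1 :: real^'w);
                 mb = (\<lambda>j w. muz); sb = (\<lambda>j w. \<chi> i. (sigz $ i)^2);
                 dec = (\<lambda>z. mux)
             in gmvae_admissible K mz sz mw sw mb sb dec \<and> gmvae_loss_defined K mz sz mw sw mb sb dec \<and>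
                gmvae_loss mux K mz sz mw sw mb sb dec = - (\<Sum>x\<in>UNIV. bern mux x * ln (bern mux x))"
    unfolding Let_def s2_def[symmetric]
    using s2p assms(2)
    by (simp add: i1 v1 fz2 fz3 fz4 gmvae_admissible_def gmvae_loss_defined_def gmvae_loss_def elbo_def)
qed

end
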